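(* Let $n\ge2$ and $0\le m\le n(n-1)$. For each vertex $i$ of $\mathbb G(n,m)$ with in-degree $d_i$, the tails of its $d_i$ incoming arcs are exactly the $d_i$ smallest elements of $\{1,\dots,n\}\setminus\{i\}$.
   Context: For integers $n\ge2$ and $0\le m\le n(n-1)$, $\mathbb G(n,m)$ is the simple directed graph on vertex set $\{1,\dots,n\}$ whose arc set is $\{(\lceil \frac{i}{n-1}\rceil,\ n-((i-1)\bmod n)) : i=1,\dots,m\}$, where an arc $(j,k)$ goes from tail $j$ to head $k$ and $a\bmod b\in\{0,\dots,b-1\}$; these $m$ pairs are pairwise distinct pairs of distinct vertices. *)

theory Defs
  imports Complex_Main
begin

definition arc_tail :: "nat \<Rightarrow> nat \<Rightarrow> nat" where
  "arc_tail n i = nat \<lceil>real i / real (n - 1)\<rceil>"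

definition arc_head :: "nat \<Rightarrow> nat \<Rightarrow> nat" where
  "arc_head n i = n - ((i - 1) mod n)"

definition GG_arcs :: "nat \<Rightarrow> nat \<Rightarrow> (nat \<times> nat) set" where
  "GG_arcs n m = {(arc_tail n i, arc_head n i) | i. i \<in> {1..m}}"

definition in_arcs :: "nat \<Rightarrow> nat \<Rightarrow> nat \<Rightarrow> (nat \<times> nat) set" where
  "in_arcs n m v = {a \<in> GG_arcs n m. snd a = v}"

definition in_degree :: "nat \<Rightarrow> nat \<Rightarrow> nat \<Rightarrow> nat" where
  "in_degree n m v = card (in_arcs n m v)"

definition smallest :: "nat \<Rightarrow> nat set \<Rightarrow> nat set" where
  "smallest d S = set (take d (sorted_list_of_set S))"

end

theory Submission
  imports Defs
begin

lemma tail_div: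
  assumes "n \<ge> 2"
  shows "arc_tail n i = (i + n - 2) div (n - 1)"
proof -
  define N where "N = n - 1"
  have N: "N \<ge> 1" using assms N_def by simp
  define q where "q = (i + N - 1) div N"
  have h1: "q * N \<le> i + N - 1" unfolding q_def using div_times_less_eq_dividend by blast
  have h2: "i + N - 1 < (q + 1) * N"
  proof -
    have m: "(i + N - 1) mod N < N" using N by simp
    have "q * N + (i + N - 1) mod N = i + N - 1" unfolding q_def by (rule div_mult_mod_eq)
    thus ?thesis using m by simp
  qed
  have a: "i \<le> q * N" using h2 N by (simp add: algebra_simps)
  have b: "q * N < i + N" using h1 N by linarith
  have "\<lceil>real i / real N\<rceil> = int q"
  proof (rule ceiling_unique)
    have "real q * real N < real i + real N" using b by (metis of_nat_add of_nat_less_iff of_nat_mult)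
    hence "(real q - 1) * real N < real i" by (simp add: algebra_simps)
    thus "real_of_int (int q) - 1 < real i / real N" using N by (simp add: pos_less_divide_eq)
    have "real i \<le> real q * real N" using a by (metis of_nat_le_iff of_nat_mult)
    thus "real i / real N \<le> real_of_int (int q)" using N by (simp add: pos_divide_le_eq)
  qed
  hence "arc_tail n i = q" unfolding arc_tail_def N_def by simp
  moreover have "i + n - 2 = i + N - 1" using N_def assms by simp
  ultimately show ?thesis unfolding q_def N_def by simp
qed

lemma in_arcs_eq:
  assumes "n \<ge> 2" and "m \<le> n * (n - 1)" and "v \<in> {1..n}"
  shows "in_arcs n m v = (\<lambda>k. (arc_tail n (n - v + 1 + k * n), v)) ` {k. k < n - 1 \<and> n - v + 1 + k * n \<le> m}"
proof safe
  fix a b assume "(a, b) \<in> in_arcs n m v"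
  then obtain i where i: "i \<in> {1..m}" "a = arc_tail n i" "arc_head n i = v" "b = v"
    unfolding in_arcs_def GG_arcs_def by auto
  have "(i - 1) mod n < n" using assms by simp
  hence r: "(i - 1) mod n = n - v" using i(3) assms(3) unfolding arc_head_def by auto
  define k where "k = (i - 1) div n"
  have e: "k * n + (n - v) = i - 1" using div_mult_mod_eq[of "i - 1" n] unfolding r k_def .
  have i1: "1 \<le> i" "i \<le> m" using i(1) by auto
  have ie: "i = n - v + 1 + k * n" using e i1 by linarith
  have "k * n < i" using ie by linarith
  also have "i \<le> n * (n - 1)" using i1 assms(2) by linarith
  finally have "k * n < (n - 1) * n" by (simp add: mult.commute)
  hence "k < n - 1" by simp
  thus "(a, b) \<in> (\<lambda>k. (arc_tail n (n - v + 1 + k * n), v)) ` {k. k < n - 1 \<and> n - v + 1 + k * n \<le> m}"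
    using ie i by auto
next
  fix k assume k: "k < n - 1" "n - v + 1 + k * n \<le> m"
  define i where "i = n - v + 1 + k * n"
  have "i - 1 = (n - v) + k * n" unfolding i_def by simp
  hence "(i - 1) mod n = (n - v) mod n" by simp
  also have "\<dots> = n - v" using assms by simp
  finally have "(i - 1) mod n = n - v" .
  hence "arc_head n i = v" unfolding arc_head_def using assms(3) by simp
  moreover have "i \<in> {1..m}" using k unfolding i_def by simp
  ultimately show "(arc_tail n (n - v + 1 + k * n), v) \<in> in_arcs n m v"
    unfolding in_arcs_def GG_arcs_def i_def by auto
qed

lemma tail_explicit:
  assumes "n \<ge> 2" and "v \<in> {1..n}" and "k < n - 1"
  shows "arc_tail n (n - v + 1 + k * n) = (if k + 1 < v then k + 1 else k + 2)"
proof -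
  define N where "N = n - 1"
  have n: "n = N + 1" "N \<ge> 1" using assms N_def by auto
  define r where "r = N + 1 - v + k"
  have e: "n - v + 1 + k * n + n - 2 = (k + 1) * N + r"
    unfolding r_def using n assms(2) by (simp add: algebra_simps)
  have rl: "r < 2 * N" unfolding r_def using assms n by auto
  have "N \<noteq> 0" using n by simp
  hence "((k + 1) * N + r) div N = k + 1 + r div N" by (rule div_mult_self3)
  moreover have "r div N = (if k + 1 < v then 0 else 1)"
  proof (cases "k + 1 < v")
    case True hence "r < N" unfolding r_def using assms n by auto
    thus ?thesis using True by simp
  next
    case False hence "N \<le> r" "r - N < N" unfolding r_def using assms rl n by auto
    thus ?thesis using False n by (simp add: div_if)
  qed
  moreover have "arc_tail n (n - v + 1 + k * n) = ((k + 1) * N + r) div N"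
    unfolding tail_div[OF assms(1)] e N_def[symmetric] ..
  ultimately show ?thesis by (simp only:) simp
qed

theorem lemma11:
  fixes n m i :: nat
  assumes "n \<ge> 2" and "m \<le> n * (n - 1)" and "i \<in> {1..n}"
  shows "fst ` in_arcs n m i = smallest (in_degree n m i) ({1..n} - {i})"
proof -
  define N where "N = n - 1"
  define g where "g k = (if k + 1 < i then k + 1 else k + 2)" for k
  define S where "S = {k. k < n - 1 \<and> n - i + 1 + k * n \<le> m}"
  define q where "q = (if n - i + 1 \<le> m then (m - (n - i + 1)) div n + 1 else 0)"
  define d where "d = min N q"
  have Sd: "S = {..<d}"
  proof -
    have kq: "n - i + 1 + k * n \<le> m \<longleftrightarrow> k < q" for k
    proof (cases "n - i + 1 \<le> m")
      case True
      have n0: "0 < n" using assms(1) by simp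
      have "n - i + 1 + k * n \<le> m \<longleftrightarrow> k * n \<le> m - (n - i + 1)" using True by linarith
      also have "\<dots> \<longleftrightarrow> k \<le> (m - (n - i + 1)) div n"
        using less_eq_div_iff_mult_less_eq[OF n0, of k "m - (n - i + 1)"] by (rule sym)
      also have "\<dots> \<longleftrightarrow> k < q" unfolding q_def using True by (simp add: less_Suc_eq_le)
      finally show ?thesis .
    next
      case False thus ?thesis unfolding q_def by auto
    qed
    show ?thesis
    proof (rule set_eqI)
      fix k
      have "k \<in> S \<longleftrightarrow> k < n - 1 \<and> k < q" unfolding S_def using kq[of k] by simp
      thus "k \<in> S \<longleftrightarrow> k \<in> {..<d}" unfolding d_def N_def by simp
    qed
  qed
  have gmono: "strict_mono g"
  proof (rule strict_monoI)
    fix x y :: nat assume "x < y" thus "g x < g y" unfolding g_def by simp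
  qed
  have fg: "arc_tail n (n - i + 1 + k * n) = g k" if "k \<in> S" for k
  proof -
    have "k < n - 1" using that unfolding S_def by simp
    from tail_explicit[OF assms(1) assms(3) this] show ?thesis by (simp add: g_def)
  qed
  have IA: "in_arcs n m i = (\<lambda>k. (arc_tail n (n - i + 1 + k * n), i)) ` S"
    using in_arcs_eq[OF assms] unfolding S_def .
  also have "\<dots> = (\<lambda>k. (g k, i)) ` S" using fg by (auto intro!: image_cong)
  finally have IA2: "in_arcs n m i = (\<lambda>k. (g k, i)) ` S" .
  have inj: "inj_on (\<lambda>k. (g k, i)) S" using strict_mono_imp_inj_on[OF gmono]
    unfolding inj_on_def by auto
  have deg: "in_degree n m i = d" unfolding in_degree_def IA2 using card_image[OF inj] Sd by simp
  have lhs: "fst ` in_arcs n m i = g ` {..<d}" unfolding IA2 Sd by (auto simp: image_image)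
  have setg: "set (map g [0..<N]) = {1..n} - {i}"
  proof (rule set_eqI, rule iffI)
    fix x assume "x \<in> set (map g [0..<N])"
    then obtain k where "k < N" "x = g k" by auto
    thus "x \<in> {1..n} - {i}" unfolding g_def N_def using assms by (auto split: if_splits)
  next
    fix x assume x0: "x \<in> {1..n} - {i}"
    hence x: "x \<in> {1..n}" "x \<noteq> i" by auto
    show "x \<in> set (map g [0..<N])"
    proof (cases "x < i")
      case True
      hence "g (x - 1) = x" "x - 1 < N" unfolding g_def N_def using x assms by auto
      thus ?thesis by (metis atLeastLessThan_iff image_eqI le0 list.set_map set_upt)
    next
      case False
      hence "g (x - 2) = x" "x - 2 < N" unfolding g_def N_def using x assms by auto
      thus ?thesis by (metis atLeastLessThan_iff image_eqI le0 list.set_map set_upt)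
    qed
  qed
  have sl: "sorted_list_of_set ({1..n} - {i}) = map g [0..<N]"
  proof -
    have "sorted (map g [0..<N])" using gmono
      by (simp add: sorted_iff_nth_mono strict_mono_less_eq)
    moreover have "distinct (map g [0..<N])" using strict_mono_imp_inj_on[OF gmono]
      by (simp add: distinct_map inj_on_subset)
    ultimately show ?thesis unfolding setg[symmetric] sorted_list_of_set_sort_remdups
      by (simp add: distinct_remdups_id sorted_sort_id)
  qed
  have "smallest d ({1..n} - {i}) = g ` {..<d}"
    unfolding smallest_def sl d_def by (auto simp: take_map)
  thus ?thesis using lhs deg by simp
qed

end
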